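(* Let $\mathbf{A} \in \mathbb{R}^{n\times d}$ be a sensing matrix, let $\mathbf{x}^* \in \mathbb{R}^d$ with $K = \|\mathbf{x}^*\|_0$, and let the measurements be $\mathbf{y} = \mathbf{A}\mathbf{x}^* + \boldsymbol{\varepsilon}$ with noise $\boldsymbol{\varepsilon} \in \mathbb{R}^n$. Pick an integer $k \ge K$ and let $\nu = 1 + \frac{\rho + \sqrt{(4+\rho)\rho}}{2}$ with $\rho = \frac{\min\{K, d-k\}}{k - K + \min\{K, d-k\}}$. Consider the iterative hard thresholding (IHT) iterates $$\mathbf{x}^{t} = \mathcal{H}_k\big(\mathbf{x}^{t-1} + \mathbf{A}^\top(\mathbf{y} - \mathbf{A}\mathbf{x}^{t-1})\big), \quad t \ge 1.$$ If the restricted isometry constant satisfies $\delta_{2k+K} \le 1/\sqrt{8\nu}$, then the sequence $(\mathbf{x}^t)$ converges to $\mathbf{x}^*$, up to the energy of the noise, with a geometric rate of $0.5$ (i.e. the error is reduced by a factor $0.5$ per iteration up to an additive term proportional to $\|\boldsymbol{\varepsilon}\|_2$).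
   Context: $\mathcal{H}_k(\mathbf{v})$ keeps the $k$ largest-in-magnitude entries of $\mathbf{v}$ and zeros the rest (ties broken lexicographically). The $r$-th restricted isometry constant $\delta_r$ of $\mathbf{A}$ is the smallest $\delta \ge 0$ such that $(1-\delta)\|\mathbf{x}\|_2^2 \le \|\mathbf{A}\mathbf{x}\|_2^2 \le (1+\delta)\|\mathbf{x}\|_2^2$ for all $r$-sparse $\mathbf{x} \in \mathbb{R}^d$. *)

theory Defs
  imports "HOL-Analysis.Analysis"
begin

definition l0 :: "real ^ 'd \<Rightarrow> nat" where
  "l0 v = card {i. v $ i \<noteq> 0}"

text \<open>Hard thresholding: keep the k largest-in-magnitude entries; ties broken
  lexicographically (smaller index preferred). Entry i is kept iff fewer than k
  indices precede it in this order.\<close>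
definition hard_thr :: "nat \<Rightarrow> real ^ ('d::{finite,linorder}) \<Rightarrow> real ^ ('d::{finite,linorder})" where
  "hard_thr k v = (\<chi> i. if card {j. \<bar>v $ j\<bar> > \<bar>v $ i\<bar> \<or> (\<bar>v $ j\<bar> = \<bar>v $ i\<bar> \<and> j < i)} < k
                          then v $ i else 0)"

definition ric :: "real ^ 'd ^ 'n \<Rightarrow> nat \<Rightarrow> real" where
  "ric A r = Inf {\<delta>. \<delta> \<ge> 0 \<and> (\<forall>x. l0 x \<le> r \<longrightarrow>
        (1 - \<delta>) * (norm x)\<^sup>2 \<le> (norm (A *v x))\<^sup>2 \<and>
        (norm (A *v x))\<^sup>2 \<le> (1 + \<delta>) * (norm x)\<^sup>2)}"

definition iht_rho :: "nat \<Rightarrow> nat \<Rightarrow> nat \<Rightarrow> real" where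
  "iht_rho d k K = real (min K (d - k)) / (real k - real K + real (min K (d - k)))"

definition iht_nu :: "nat \<Rightarrow> nat \<Rightarrow> nat \<Rightarrow> real" where
  "iht_nu d k K = 1 + (iht_rho d k K + sqrt ((4 + iht_rho d k K) * iht_rho d k K)) / 2"

end

theory Submission
  imports Defs
begin

definition predz :: "real^('d::{finite,linorder}) \<Rightarrow> 'd \<Rightarrow> 'd set" where
  "predz z i = {j. \<bar>z$j\<bar> > \<bar>z$i\<bar> \<or> (\<bar>z$j\<bar> = \<bar>z$i\<bar> \<and> j < i)}"
definition kept :: "nat \<Rightarrow> real^('d::{finite,linorder}) \<Rightarrow> 'd set" where
  "kept k z = {i. card (predz z i) < k}"

lemma hard_thr_nth: "hard_thr k z $ i = (if i \<in> kept k z then z$i else 0)"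
  by (simp add: hard_thr_def kept_def predz_def)

lemma predz_sub: "j \<in> predz z i \<Longrightarrow> predz z j \<subset> predz z i"
  unfolding predz_def by auto

lemma predz_irr: "i \<notin> predz z i" unfolding predz_def by auto

lemma predz_total: "i \<noteq> j \<Longrightarrow> i \<in> predz z j \<or> j \<in> predz z i"
  unfolding predz_def by (auto simp: neq_iff)

lemma rank_less: "j \<in> predz z i \<Longrightarrow> card (predz z j) < card (predz z i)"
  by (meson finite psubset_card_mono predz_sub)

lemma rank_inj: "inj (\<lambda>i. card (predz z i))"
  by (metis (mono_tags, lifting) injI nat_neq_iff predz_total rank_less)

lemma card_kept_le: "card (kept k z) \<le> k"
proof -
  have "card (kept k z) \<le> card {..<k}"
    by (rule card_inj_on_le[OF inj_on_subset[OF rank_inj]]) (auto simp: kept_def)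
  thus ?thesis by simp
qed

lemma card_kept_eq: assumes "k \<le> CARD('d)"
  shows "card (kept k (z::real^('d::{finite,linorder}))) = k"
proof -
  let ?r = "\<lambda>i. card (predz z i)"
  have sub: "?r ` UNIV \<subseteq> {..<CARD('d)}"
  proof
    fix n assume "n \<in> ?r ` UNIV"
    then obtain i where n: "n = ?r i" by auto
    have "predz z i \<subseteq> UNIV - {i}" using predz_irr by blast
    hence "?r i \<le> card (UNIV - {i::'d})" by (intro card_mono) auto
    also have "\<dots> < CARD('d)" using finite_UNIV_card_ge_0[where 'a='d] by (simp add: card_Diff_singleton)
    finally show "n \<in> {..<CARD('d)}" using n by simp
  qed
  have "card (?r ` UNIV) = CARD('d)" using rank_inj card_image by blast
  hence eq: "?r ` UNIV = {..<CARD('d)}"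
    using sub by (metis card_lessThan card_subset_eq finite_lessThan)
  have "?r ` kept k z = {..<k}"
  proof
    show "?r ` kept k z \<subseteq> {..<k}" by (auto simp: kept_def)
    show "{..<k} \<subseteq> ?r ` kept k z"
    proof
      fix n assume "n \<in> {..<k}"
      hence "n \<in> ?r ` UNIV" using eq assms by auto
      then obtain i where "n = ?r i" by auto
      thus "n \<in> ?r ` kept k z" using \<open>n \<in> {..<k}\<close> by (auto simp: kept_def)
    qed
  qed
  hence "card {..<k} = card (kept k z)"
    by (metis card_image inj_on_subset[OF rank_inj] subset_UNIV)
  thus ?thesis by simp
qed

lemma kept_order: assumes "i \<notin> kept k z" "j \<in> kept k z" shows "\<bar>z$i\<bar> \<le> \<bar>z$j\<bar>"
proof (rule ccontr)
  assume "\<not> ?thesis"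
  hence "i \<in> predz z j" by (simp add: predz_def)
  hence "card (predz z i) < card (predz z j)" by (rule rank_less)
  thus False using assms by (auto simp: kept_def)
qed

lemma nsq: "(norm (v::real^'d))\<^sup>2 = (\<Sum>i\<in>UNIV. (v$i)\<^sup>2)"
  by (simp add: norm_vec_def L2_set_def sum_nonneg)

lemma rho_nonneg: "K \<le> k \<Longrightarrow> 0 \<le> iht_rho d k K"
  unfolding iht_rho_def by (auto intro!: divide_nonneg_nonneg)

lemma nu_ge1: assumes "K \<le> k" shows "1 \<le> iht_nu d k K"
proof -
  have "0 \<le> iht_rho d k K" using rho_nonneg assms .
  moreover have "0 \<le> sqrt ((4 + iht_rho d k K) * iht_rho d k K)" using calculation by simp
  ultimately show ?thesis unfolding iht_nu_def by simp
qed

lemma nu_id: assumes "K \<le> k" shows "(iht_nu d k K - 1)\<^sup>2 = iht_rho d k K * iht_nu d k K"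
proof -
  define r where "r = iht_rho d k K"
  define s where "s = sqrt ((4 + r) * r)"
  have r0: "0 \<le> r" using rho_nonneg assms r_def by simp
  have s2: "s\<^sup>2 = (4 + r) * r" unfolding s_def using r0 by simp
  have nu: "iht_nu d k K = 1 + (r + s)/2" unfolding iht_nu_def r_def s_def by simp
  have "(iht_nu d k K - 1)\<^sup>2 - r * iht_nu d k K = (s\<^sup>2 - (4 + r) * r)/4"
    unfolding nu by (simp add: power2_eq_square field_simps)
  thus ?thesis using s2 unfolding r_def by simp
qed

lemma nu_gt1: assumes "K \<le> k" "0 < iht_rho d k K" shows "1 < iht_nu d k K"
proof -
  have "0 \<le> sqrt ((4 + iht_rho d k K) * iht_rho d k K)" using assms by simp
  hence "0 < iht_rho d k K + sqrt ((4 + iht_rho d k K) * iht_rho d k K)" using assms by linarith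
  thus ?thesis unfolding iht_nu_def by simp
qed

lemma coord: fixes \<nu> c z x :: real
  assumes "1 < \<nu>" "z\<^sup>2 \<le> c"
  shows "x\<^sup>2 \<le> \<nu>/(\<nu>-1)*c + \<nu>*(z-x)\<^sup>2"
proof -
  define \<mu> where "\<mu> = \<nu> - 1"
  define a where "a = x - z"
  have mu: "0 < \<mu>" using assms \<mu>_def by simp
  have "0 \<le> (\<mu>*a - z)\<^sup>2/\<mu>" using mu by simp
  hence h: "2*a*z \<le> \<mu>*a\<^sup>2 + z\<^sup>2/\<mu>" using mu
    by (simp add: power2_eq_square field_simps)
  have h2: "z\<^sup>2/\<mu> \<le> c/\<mu>" using assms(2) mu by (simp add: divide_right_mono)
  have "x\<^sup>2 = a\<^sup>2 + 2*a*z + z\<^sup>2" unfolding a_def by (simp add: power2_eq_square algebra_simps)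
  also have "\<dots> \<le> a\<^sup>2 + \<mu>*a\<^sup>2 + c/\<mu> + c" using h h2 assms(2) by linarith
  also have "\<dots> = \<nu>/(\<nu>-1)*c + \<nu>*(z-x)\<^sup>2" unfolding \<mu>_def a_def using mu \<mu>_def
    by (simp add: field_simps power2_eq_square)
  finally show ?thesis .
qed

lemma tight:
  fixes z x :: "real^('d::{finite,linorder})"
  assumes "l0 x \<le> K" "K \<le> k" "k \<le> CARD('d)"
  shows "(norm (hard_thr k z - x))\<^sup>2 \<le> iht_nu CARD('d) k K * (\<Sum>i\<in>kept k z \<union> {i. x$i \<noteq> 0}. (z$i - x$i)\<^sup>2)"
proof -
  define S where "S = kept k z"
  define T where "T = {i. x$i \<noteq> 0}"
  define U where "U = T - S"
  define P where "P = S - T"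
  define \<nu> where "\<nu> = iht_nu CARD('d) k K"
  define \<rho> where "\<rho> = iht_rho CARD('d) k K"
  have nu1: "1 \<le> \<nu>" unfolding \<nu>_def using nu_ge1 assms(2) .
  have "(norm (hard_thr k z - x))\<^sup>2 = (\<Sum>i\<in>UNIV. (hard_thr k z $ i - x$i)\<^sup>2)" by (simp add: nsq)
  also have "\<dots> = (\<Sum>i\<in>UNIV - S. (hard_thr k z $ i - x$i)\<^sup>2) + (\<Sum>i\<in>S. (hard_thr k z $ i - x$i)\<^sup>2)"
    by (rule sum.subset_diff) auto
  also have "(\<Sum>i\<in>S. (hard_thr k z $ i - x$i)\<^sup>2) = (\<Sum>i\<in>S. (z $ i - x$i)\<^sup>2)"
    by (rule sum.cong) (auto simp: hard_thr_nth S_def)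
  also have "(\<Sum>i\<in>UNIV - S. (hard_thr k z $ i - x$i)\<^sup>2) = (\<Sum>i\<in>U. (x$i)\<^sup>2)"
  proof -
    have "(\<Sum>i\<in>UNIV - S. (hard_thr k z $ i - x$i)\<^sup>2) = (\<Sum>i\<in>UNIV - S. (x$i)\<^sup>2)"
      by (rule sum.cong) (auto simp: hard_thr_nth S_def)
    also have "\<dots> = (\<Sum>i\<in>U. (x$i)\<^sup>2)"
      by (rule sum.mono_neutral_right) (auto simp: U_def T_def)
    finally show ?thesis .
  qed
  finally have eq1: "(norm (hard_thr k z - x))\<^sup>2 = (\<Sum>i\<in>U. (x$i)\<^sup>2) + (\<Sum>i\<in>S. (z $ i - x$i)\<^sup>2)" .
  have SU: "kept k z \<union> {i. x$i \<noteq> 0} = S \<union> U" unfolding S_def U_def T_def by auto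
  have eq2: "(\<Sum>i\<in>S \<union> U. (z$i - x$i)\<^sup>2) = (\<Sum>i\<in>S. (z$i - x$i)\<^sup>2) + (\<Sum>i\<in>U. (z$i - x$i)\<^sup>2)"
    by (rule sum.union_disjoint) (auto simp: U_def)
  have nnS: "0 \<le> (\<Sum>i\<in>S. (z$i - x$i)\<^sup>2)" by (simp add: sum_nonneg)
  have nnU: "0 \<le> (\<Sum>i\<in>U. (z$i - x$i)\<^sup>2)" by (simp add: sum_nonneg)
  have key: "(\<Sum>i\<in>U. (x$i)\<^sup>2) \<le> (\<nu> - 1) * (\<Sum>i\<in>S. (z$i - x$i)\<^sup>2) + \<nu> * (\<Sum>i\<in>U. (z$i - x$i)\<^sup>2)"
  proof (cases "U = {}")
    case True
    thus ?thesis using nnS nnU nu1 by simp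
  next
    case False
    define m where "m = card U"
    define p where "p = card P"
    define M where "M = min K (CARD('d) - k)"
    have m1: "1 \<le> m" using False unfolding m_def by (simp add: Suc_le_eq card_gt_0_iff)
    have cS: "card S = k" unfolding S_def using card_kept_eq assms(3) .
    have cT: "card T \<le> K" using assms(1) unfolding T_def l0_def .
    have "card T = card (S \<inter> T) + m" unfolding m_def
      by (subst card_Un_disjoint[symmetric]) (auto simp: U_def intro!: arg_cong[where f=card])
    moreover have "card S = card (S \<inter> T) + p" unfolding p_def
      by (subst card_Un_disjoint[symmetric]) (auto simp: P_def intro!: arg_cong[where f=card])
    moreover have "m \<le> card (UNIV - S)" unfolding m_def by (rule card_mono) (auto simp: U_def)
    moreover have "card (UNIV - S) = CARD('d) - k" using cS by (simp add: card_Diff_subset)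
    ultimately have mM: "m \<le> M" and pk: "k + m \<le> p + K" using cS cT unfolding M_def by auto
    have kK: "K \<le> k" using assms(2) .
    have Dpos: "0 < real k - real K + real M" using mM m1 kK by simp
    have rho: "\<rho> = real M / (real k - real K + real M)"
      unfolding \<rho>_def iht_rho_def M_def by simp
    have rhopos: "0 < \<rho>" unfolding rho using Dpos mM m1 by simp
    have nu1': "1 < \<nu>" unfolding \<nu>_def using nu_gt1 kK rhopos unfolding \<rho>_def .
    have "real m * (real k - real K + real M) \<le> real M * real p"
    proof -
      have a: "real k - real K + real m \<le> real p" using pk by linarith
      have b: "real m * (real k - real K) \<le> real M * (real k - real K)"
        using mM kK by (intro mult_right_mono) auto
      have "real M * (real k - real K + real m) \<le> real M * real p" using a by (intro mult_left_mono) auto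
      thus ?thesis using b by (simp add: algebra_simps)
    qed
    hence mrho: "real m \<le> \<rho> * real p" unfolding rho using Dpos by (simp add: field_simps)
    have idn: "(\<nu> - 1)\<^sup>2 = \<rho> * \<nu>" unfolding \<nu>_def \<rho>_def using nu_id kK .
    have "real m * \<nu> \<le> (\<nu> - 1)\<^sup>2 * real p" unfolding idn using mrho nu1
      by (metis mult.commute mult.left_commute mult_right_mono order_trans le_numeral_extra(1) zero_le_one less_eq_real_def nu1' dual_order.strict_trans1 zero_less_one)
    hence cf: "real m * (\<nu> / (\<nu> - 1)) \<le> (\<nu> - 1) * real p" using nu1'
      by (simp add: field_simps power2_eq_square)
    have Pne: "P \<noteq> {}" using pk m1 kK unfolding p_def by (metis card.empty add_le_cancel_right le_trans le_add2 not_one_le_zero add.commute linorder_not_le le_diff_conv)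
    define c where "c = Min ((\<lambda>j. (z$j)\<^sup>2) ` P)"
    have cle: "\<And>j. j \<in> P \<Longrightarrow> c \<le> (z$j)\<^sup>2" unfolding c_def by (intro Min_le) auto
    have c0: "0 \<le> c" unfolding c_def using Pne by (subst Min_ge_iff) auto
    have Uc: "\<And>i. i \<in> U \<Longrightarrow> (z$i)\<^sup>2 \<le> c"
    proof -
      fix i assume i: "i \<in> U"
      show "(z$i)\<^sup>2 \<le> c" unfolding c_def using Pne
      proof (subst Min_ge_iff, simp_all, intro ballI)
        fix j assume "j \<in> P"
        hence "\<bar>z$i\<bar> \<le> \<bar>z$j\<bar>" using i kept_order unfolding U_def P_def S_def by blast
        thus "(z$i)\<^sup>2 \<le> (z$j)\<^sup>2" by (simp add: abs_le_square_iff)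
      qed
    qed
    have "(\<Sum>i\<in>U. (x$i)\<^sup>2) \<le> (\<Sum>i\<in>U. \<nu>/(\<nu>-1)*c + \<nu>*(z$i-x$i)\<^sup>2)"
      by (rule sum_mono) (rule coord[OF nu1' Uc])
    also have "\<dots> = real m * (\<nu>/(\<nu>-1)) * c + \<nu> * (\<Sum>i\<in>U. (z$i-x$i)\<^sup>2)"
      by (simp add: sum.distrib sum_distrib_left m_def)
    also have "real m * (\<nu>/(\<nu>-1)) * c \<le> (\<nu> - 1) * real p * c"
      using cf c0 by (rule mult_right_mono)
    also have "(\<nu> - 1) * real p * c \<le> (\<nu> - 1) * (\<Sum>i\<in>P. (z$i)\<^sup>2)"
    proof -
      have "real p * c \<le> (\<Sum>i\<in>P. (z$i)\<^sup>2)" unfolding p_def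
        using sum_bounded_below[of P c "\<lambda>i. (z$i)\<^sup>2"] cle by simp
      thus ?thesis using nu1 by (simp add: mult.assoc mult_left_mono)
    qed
    also have "(\<Sum>i\<in>P. (z$i)\<^sup>2) = (\<Sum>i\<in>P. (z$i - x$i)\<^sup>2)"
      by (rule sum.cong) (auto simp: P_def T_def)
    also have "\<dots> \<le> (\<Sum>i\<in>S. (z$i - x$i)\<^sup>2)"
      by (rule sum_mono2) (auto simp: P_def)
    finally show ?thesis using nu1 by (simp add: mult_left_mono)
  qed
  show ?thesis unfolding SU eq1 eq2 \<nu>_def[symmetric] using key by (simp add: algebra_simps)
qed

lemma bnd: "\<exists>C>0. \<forall>x. norm ((A::real^'d^'n) *v x) \<le> norm x * C"
  using bounded_linear.pos_bounded[OF matrix_vector_mul_bounded_linear] by blast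

lemma ric_props:
  fixes A :: "real^'d^'n"
  shows "0 \<le> ric A r"
    and "l0 x \<le> r \<Longrightarrow> (1 - ric A r) * (norm x)\<^sup>2 \<le> (norm (A *v x))\<^sup>2 \<and> (norm (A *v x))\<^sup>2 \<le> (1 + ric A r) * (norm x)\<^sup>2"
proof -
  define D where "D = {\<delta>. \<delta> \<ge> 0 \<and> (\<forall>x. l0 x \<le> r \<longrightarrow>
        (1 - \<delta>) * (norm x)\<^sup>2 \<le> (norm (A *v x))\<^sup>2 \<and>
        (norm (A *v x))\<^sup>2 \<le> (1 + \<delta>) * (norm x)\<^sup>2)}"
  have ric: "ric A r = Inf D" unfolding ric_def D_def ..
  obtain C where C: "C > 0" "\<And>x. norm (A *v x) \<le> norm x * C" using bnd by blast
  have "C\<^sup>2 + 1 \<in> D"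
  proof -
    { fix x :: "real^'d"
      have "(norm (A *v x))\<^sup>2 \<le> (norm x * C)\<^sup>2" using C(2)[of x] by (simp add: power_mono)
      also have "\<dots> \<le> (1 + (C\<^sup>2 + 1)) * (norm x)\<^sup>2" by (simp add: power_mult_distrib algebra_simps)
      finally have "(norm (A *v x))\<^sup>2 \<le> (1 + (C\<^sup>2 + 1)) * (norm x)\<^sup>2" .
      moreover have "(1 - (C\<^sup>2 + 1)) * (norm x)\<^sup>2 \<le> (norm (A *v x))\<^sup>2"
      proof -
        have "(1 - (C\<^sup>2 + 1)) * (norm x)\<^sup>2 = -(C\<^sup>2 * (norm x)\<^sup>2)" by simp
        moreover have "0 \<le> C\<^sup>2 * (norm x)\<^sup>2" by simp
        moreover have "0 \<le> (norm (A *v x))\<^sup>2" by simp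
        ultimately show ?thesis by linarith
      qed
      ultimately have "(1 - (C\<^sup>2 + 1)) * (norm x)\<^sup>2 \<le> (norm (A *v x))\<^sup>2 \<and> (norm (A *v x))\<^sup>2 \<le> (1 + (C\<^sup>2 + 1)) * (norm x)\<^sup>2" by simp }
    thus ?thesis unfolding D_def by (auto intro: add_nonneg_nonneg)
  qed
  hence ne: "D \<noteq> {}" by blast
  show "0 \<le> ric A r" unfolding ric by (rule cInf_greatest[OF ne]) (auto simp: D_def)
  assume lx: "l0 x \<le> r"
  show "(1 - ric A r) * (norm x)\<^sup>2 \<le> (norm (A *v x))\<^sup>2 \<and> (norm (A *v x))\<^sup>2 \<le> (1 + ric A r) * (norm x)\<^sup>2"
  proof (cases "x = 0")
    case True thus ?thesis by simp
  next
    case False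
    define n where "n = (norm x)\<^sup>2"
    define a where "a = (norm (A *v x))\<^sup>2"
    have n0: "0 < n" using False n_def by simp
    have "(n - a)/n \<le> Inf D"
    proof (rule cInf_greatest[OF ne])
      fix \<delta> assume "\<delta> \<in> D"
      hence "(1 - \<delta>) * n \<le> a" using lx unfolding D_def n_def a_def by blast
      thus "(n - a)/n \<le> \<delta>" using n0 by (simp add: field_simps)
    qed
    moreover have "(a - n)/n \<le> Inf D"
    proof (rule cInf_greatest[OF ne])
      fix \<delta> assume "\<delta> \<in> D"
      hence "a \<le> (1 + \<delta>) * n" using lx unfolding D_def n_def a_def by blast
      thus "(a - n)/n \<le> \<delta>" using n0 by (simp add: field_simps)
    qed
    ultimately show ?thesis unfolding ric[symmetric] n_def[symmetric] a_def[symmetric]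
      using n0 by (simp add: field_simps)
  qed
qed

lemma l0_sub: "{i. v$i \<noteq> 0} \<subseteq> \<Omega> \<Longrightarrow> l0 v \<le> card \<Omega>"
  unfolding l0_def by (rule card_mono) auto

lemma rip_polar:
  fixes A :: "real^'d^'n" and u v :: "real^'d"
  assumes "{i. u$i \<noteq> 0} \<subseteq> \<Omega>" "{i. v$i \<noteq> 0} \<subseteq> \<Omega>" "card \<Omega> \<le> r"
  shows "\<bar>(A *v u) \<bullet> (A *v v) - u \<bullet> v\<bar> \<le> ric A r * ((norm u)\<^sup>2 + (norm v)\<^sup>2) / 2"
proof -
  define \<delta> where "\<delta> = ric A r"
  have "{i. (u+v)$i \<noteq> 0} \<subseteq> \<Omega>"
  proof
    fix i assume "i \<in> {i. (u+v)$i \<noteq> 0}"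
    hence "u$i \<noteq> 0 \<or> v$i \<noteq> 0" by auto
    thus "i \<in> \<Omega>" using assms by auto
  qed
  hence lp: "l0 (u + v) \<le> r" using assms by (intro le_trans[OF l0_sub]) auto
  have "{i. (u-v)$i \<noteq> 0} \<subseteq> \<Omega>"
  proof
    fix i assume "i \<in> {i. (u-v)$i \<noteq> 0}"
    hence "u$i \<noteq> 0 \<or> v$i \<noteq> 0" by auto
    thus "i \<in> \<Omega>" using assms by auto
  qed
  hence lm: "l0 (u - v) \<le> r" using assms by (intro le_trans[OF l0_sub]) auto
  note p = ric_props(2)[OF lp, of A, folded \<delta>_def] ric_props(2)[OF lm, of A, folded \<delta>_def]
  have e1: "(norm (A *v (u + v)))\<^sup>2 = (norm (A *v u))\<^sup>2 + 2 * ((A *v u) \<bullet> (A *v v)) + (norm (A *v v))\<^sup>2"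
    by (simp add: matrix_vector_right_distrib power2_norm_eq_inner inner_add_left inner_add_right inner_commute)
  have e2: "(norm (A *v (u - v)))\<^sup>2 = (norm (A *v u))\<^sup>2 - 2 * ((A *v u) \<bullet> (A *v v)) + (norm (A *v v))\<^sup>2"
    by (simp add: matrix_vector_mult_diff_distrib power2_norm_eq_inner inner_diff_left inner_diff_right inner_commute)
  have e3: "(norm (u + v))\<^sup>2 = (norm u)\<^sup>2 + 2 * (u \<bullet> v) + (norm v)\<^sup>2"
    by (simp add: power2_norm_eq_inner inner_add_left inner_add_right inner_commute)
  have e4: "(norm (u - v))\<^sup>2 = (norm u)\<^sup>2 - 2 * (u \<bullet> v) + (norm v)\<^sup>2"
    by (simp add: power2_norm_eq_inner inner_diff_left inner_diff_right inner_commute)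
  define X where "X = (A *v u) \<bullet> (A *v v)"
  define c where "c = u \<bullet> v"
  define a where "a = (norm u)\<^sup>2"
  define b where "b = (norm v)\<^sup>2"
  define au where "au = (norm (A *v u))\<^sup>2"
  define av where "av = (norm (A *v v))\<^sup>2"
  have q1: "(1 - \<delta>) * (a + 2*c + b) \<le> au + 2*X + av" "au + 2*X + av \<le> (1 + \<delta>) * (a + 2*c + b)"
    "(1 - \<delta>) * (a - 2*c + b) \<le> au - 2*X + av" "au - 2*X + av \<le> (1 + \<delta>) * (a - 2*c + b)"
    using p unfolding e1 e2 e3 e4 X_def c_def a_def b_def au_def av_def by auto
  have "X - c \<le> \<delta> * (a + b) / 2" using q1(2) q1(3) by (simp add: algebra_simps)
  moreover have "c - X \<le> \<delta> * (a + b) / 2" using q1(1) q1(4) by (simp add: algebra_simps)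
  ultimately have "\<bar>X - c\<bar> \<le> \<delta> * (a + b) / 2" by (intro abs_leI) linarith+
  thus ?thesis unfolding X_def c_def a_def b_def \<delta>_def .
qed

lemma rip_inner:
  fixes A :: "real^'d^'n" and u v :: "real^'d"
  assumes "{i. u$i \<noteq> 0} \<subseteq> \<Omega>" "{i. v$i \<noteq> 0} \<subseteq> \<Omega>" "card \<Omega> \<le> r"
  shows "\<bar>(A *v u) \<bullet> (A *v v) - u \<bullet> v\<bar> \<le> ric A r * norm u * norm v"
proof (cases "u = 0 \<or> v = 0")
  case True thus ?thesis by auto
next
  case False
  define a where "a = norm u"
  define b where "b = norm v"
  have a0: "0 < a" and b0: "0 < b" using False a_def b_def by auto
  define u' where "u' = (1/a) *\<^sub>R u"
  define v' where "v' = (1/b) *\<^sub>R v"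
  have "{i. u'$i \<noteq> 0} \<subseteq> \<Omega>" "{i. v'$i \<noteq> 0} \<subseteq> \<Omega>" using assms unfolding u'_def v'_def by auto
  from rip_polar[OF this assms(3), of A]
  have h: "\<bar>(A *v u') \<bullet> (A *v v') - u' \<bullet> v'\<bar> \<le> ric A r"
    using a0 b0 unfolding u'_def v'_def a_def b_def by simp
  have "(A *v u') \<bullet> (A *v v') - u' \<bullet> v' = ((A *v u) \<bullet> (A *v v) - u \<bullet> v) / (a * b)"
    unfolding u'_def v'_def by (simp add: matrix_vector_mult_scaleR diff_divide_distrib mult.commute)
  with h have "\<bar>(A *v u) \<bullet> (A *v v) - u \<bullet> v\<bar> / (a*b) \<le> ric A r" using a0 b0 by (simp add: abs_divide abs_mult)
  thus ?thesis using a0 b0 unfolding a_def[symmetric] b_def[symmetric] by (simp add: field_simps)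
qed

definition restr :: "'d set \<Rightarrow> real^'d \<Rightarrow> real^'d" where
  "restr \<Omega> v = (\<chi> i. if i \<in> \<Omega> then v$i else 0)"

lemma restr_nsq: "(norm (restr \<Omega> v))\<^sup>2 = (\<Sum>i\<in>\<Omega>. (v$i)\<^sup>2)"
proof -
  have "(norm (restr \<Omega> v))\<^sup>2 = (\<Sum>i\<in>UNIV. if i \<in> \<Omega> then (v$i)\<^sup>2 else 0)"
    unfolding nsq restr_def by (intro sum.cong) auto
  also have "\<dots> = (\<Sum>i\<in>\<Omega>. (v$i)\<^sup>2)" by (simp add: sum.If_cases)
  finally show ?thesis .
qed

lemma restr_add: "restr \<Omega> (a + b) = restr \<Omega> a + restr \<Omega> b"
  by (simp add: restr_def vec_eq_iff)

lemma restr_inner: "restr \<Omega> v \<bullet> v = (norm (restr \<Omega> v))\<^sup>2"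
proof -
  have "restr \<Omega> v \<bullet> v = restr \<Omega> v \<bullet> restr \<Omega> v"
    unfolding inner_vec_def by (intro sum.cong) (auto simp: restr_def)
  thus ?thesis by (simp add: power2_norm_eq_inner)
qed

lemma restr_supp: "{i. restr \<Omega> v $ i \<noteq> 0} \<subseteq> \<Omega>" by (auto simp: restr_def)

lemma inner_transpose: "(transpose A *v u) \<bullet> (v::real^'d) = (u::real^'n) \<bullet> (A *v v)"
  unfolding inner_vec_def matrix_vector_mult_def transpose_def
  apply (simp add: sum_distrib_left sum_distrib_right) apply (subst sum.swap) apply (simp add: mult_ac) done


lemma step_bound:
  fixes A :: "real ^ ('d::{finite,linorder}) ^ ('n::finite)"
    and xs xt :: "real ^ ('d::{finite,linorder})" and eps :: "real ^ 'n" and y :: "real ^ 'n"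
  assumes "K = l0 xs" and "y = A *v xs + eps" and "K \<le> k" and "k \<le> CARD('d)"
    and "l0 xt \<le> k"
    and "ric A (2 * k + K) \<le> 1 / sqrt (8 * iht_nu CARD('d) k K)"
  shows "norm (hard_thr k (xt + transpose A *v (y - A *v xt)) - xs) \<le> 1/2 * norm (xt - xs)
              + sqrt (iht_nu CARD('d) k K * (1 + ric A (2 * k + K))) * norm eps"
proof -
  define \<delta> where "\<delta> = ric A (2 * k + K)"
  define \<nu> where "\<nu> = iht_nu CARD('d) k K"
  define e where "e = xt - xs"
  define z where "z = xt + transpose A *v (y - A *v xt)"
  define S where "S = kept k z"
  define T where "T = {i. xs$i \<noteq> 0}"
  define \<Omega> where "\<Omega> = {i. xt$i \<noteq> 0} \<union> T \<union> S"
  have d0: "0 \<le> \<delta>" unfolding \<delta>_def by (rule ric_props(1))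
  have nu1: "1 \<le> \<nu>" unfolding \<nu>_def using nu_ge1 assms(3) .
  have cO: "card \<Omega> \<le> 2 * k + K"
  proof -
    have "card \<Omega> \<le> card ({i. xt$i \<noteq> 0} \<union> T) + card S" unfolding \<Omega>_def by (rule card_Un_le)
    also have "\<dots> \<le> card {i. xt$i \<noteq> 0} + card T + card S" using card_Un_le by simp
    also have "\<dots> \<le> k + K + k" using assms(1,5) card_kept_le[of k z]
      unfolding S_def T_def l0_def by simp
    finally show ?thesis by simp
  qed
  have suppe: "{i. e$i \<noteq> 0} \<subseteq> \<Omega>" unfolding e_def \<Omega>_def T_def by auto
  define w0 where "w0 = e - transpose A *v (A *v e)"
  define g0 where "g0 = transpose A *v eps"
  have zx: "z - xs = w0 + g0" unfolding z_def w0_def g0_def e_def assms(2)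
    by (simp add: matrix_vector_right_distrib matrix_vector_mult_diff_distrib algebra_simps)
  define w where "w = restr \<Omega> w0"
  define g where "g = restr \<Omega> g0"
  have "(norm (hard_thr k z - xs))\<^sup>2 \<le> \<nu> * (\<Sum>i\<in>kept k z \<union> {i. xs$i \<noteq> 0}. (z$i - xs$i)\<^sup>2)"
    unfolding \<nu>_def by (rule tight[OF _ assms(3) assms(4)]) (simp add: assms(1))
  also have "(\<Sum>i\<in>kept k z \<union> {i. xs$i \<noteq> 0}. (z$i - xs$i)\<^sup>2) \<le> (\<Sum>i\<in>\<Omega>. (z$i - xs$i)\<^sup>2)"
    by (rule sum_mono2) (auto simp: \<Omega>_def S_def T_def)
  also have "\<dots> = (norm (restr \<Omega> (z - xs)))\<^sup>2" by (simp add: restr_nsq)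
  also have "\<dots> = (norm (w + g))\<^sup>2" by (simp add: zx w_def g_def restr_add)
  finally have h1: "(norm (hard_thr k z - xs))\<^sup>2 \<le> \<nu> * (norm (w + g))\<^sup>2" using nu1 by simp
  have wb: "norm w \<le> \<delta> * norm e"
  proof -
    have "(norm w)\<^sup>2 = w \<bullet> w0" unfolding w_def by (simp add: restr_inner)
    also have "\<dots> = w \<bullet> e - (A *v w) \<bullet> (A *v e)"
    proof -
      have "w \<bullet> (transpose A *v (A *v e)) = (A *v w) \<bullet> (A *v e)"
        by (metis inner_commute inner_transpose)
      thus ?thesis unfolding w0_def inner_diff_right by simp
    qed
    also have "\<dots> \<le> \<bar>(A *v w) \<bullet> (A *v e) - w \<bullet> e\<bar>" by simp
    also have "\<dots> \<le> \<delta> * norm w * norm e" unfolding \<delta>_def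
      by (rule rip_inner[OF _ suppe cO]) (simp add: w_def restr_supp)
    finally have "norm w * norm w \<le> norm w * (\<delta> * norm e)" by (simp add: power2_eq_square mult_ac)
    thus ?thesis by (cases "norm w = 0") (use d0 in auto)
  qed
  have gb: "norm g \<le> sqrt (1 + \<delta>) * norm eps"
  proof -
    have lg: "l0 g \<le> 2 * k + K" using l0_sub[OF restr_supp] cO unfolding g_def by (rule le_trans)
    have "(norm (A *v g))\<^sup>2 \<le> (1 + \<delta>) * (norm g)\<^sup>2" using ric_props(2)[OF lg] unfolding \<delta>_def by blast
    hence "sqrt ((norm (A *v g))\<^sup>2) \<le> sqrt ((1 + \<delta>) * (norm g)\<^sup>2)" by (rule real_sqrt_le_mono)
    hence Ag: "norm (A *v g) \<le> sqrt (1 + \<delta>) * norm g" by (simp add: real_sqrt_mult)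
    have "(norm g)\<^sup>2 = g \<bullet> g0" unfolding g_def by (simp add: restr_inner)
    also have "\<dots> = eps \<bullet> (A *v g)" unfolding g0_def by (metis inner_commute inner_transpose)
    also have "\<dots> \<le> norm eps * norm (A *v g)" by (rule norm_cauchy_schwarz)
    also have "\<dots> \<le> norm eps * (sqrt (1 + \<delta>) * norm g)" using Ag by (simp add: mult_left_mono)
    finally have "norm g * norm g \<le> norm g * (sqrt (1 + \<delta>) * norm eps)" by (simp add: power2_eq_square mult_ac)
    thus ?thesis by (cases "norm g = 0") (use d0 in auto)
  qed
  have R: "norm (w + g) \<le> \<delta> * norm e + sqrt (1 + \<delta>) * norm eps"
    using norm_triangle_ineq[of w g] wb gb by linarith
  have "norm (hard_thr k z - xs) = sqrt ((norm (hard_thr k z - xs))\<^sup>2)" by simp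
  also have "\<dots> \<le> sqrt (\<nu> * (norm (w + g))\<^sup>2)" using h1 by (rule real_sqrt_le_mono)
  also have "\<dots> = sqrt \<nu> * norm (w + g)" by (simp add: real_sqrt_mult)
  also have "\<dots> \<le> sqrt \<nu> * (\<delta> * norm e + sqrt (1 + \<delta>) * norm eps)" by (rule mult_left_mono[OF R]) (use nu1 in simp)
  also have "\<dots> = (sqrt \<nu> * \<delta>) * norm e + sqrt (\<nu> * (1 + \<delta>)) * norm eps"
    by (simp add: real_sqrt_mult[symmetric] algebra_simps)
  also have "(sqrt \<nu> * \<delta>) * norm e \<le> 1/2 * norm e"
  proof (rule mult_right_mono)
    have sn: "0 < sqrt \<nu>" using nu1 by simp
    have "sqrt \<nu> * \<delta> \<le> sqrt \<nu> * (1 / sqrt (8 * \<nu>))"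
      using mult_left_mono[OF assms(6)[folded \<delta>_def \<nu>_def], of "sqrt \<nu>"] sn by simp
    also have "\<dots> = 1 / sqrt 8" using sn by (simp add: real_sqrt_mult)
    also have "\<dots> \<le> 1/2"
    proof -
      have "2 \<le> sqrt (8::real)" by (rule real_le_rsqrt) simp
      thus ?thesis by (simp add: divide_simps)
    qed
    finally show "sqrt \<nu> * \<delta> \<le> 1/2" .
  qed simp
  finally show ?thesis unfolding z_def e_def \<delta>_def \<nu>_def by simp
qed

theorem theorem2:
  fixes A :: "real ^ ('d::{finite,linorder}) ^ ('n::finite)"
    and xs :: "real ^ ('d::{finite,linorder})" and eps :: "real ^ 'n" and y :: "real ^ 'n"
    and k K :: nat and x :: "nat \<Rightarrow> real ^ ('d::{finite,linorder})"
  assumes "K = l0 xs"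
    and "y = A *v xs + eps"
    and "K \<le> k" and "k \<le> CARD('d::{finite,linorder})"
    and "l0 (x 0) \<le> k"
    and "\<And>t. x (Suc t) = hard_thr k (x t + transpose A *v (y - A *v x t))"
    and "ric A (2 * k + K) \<le> 1 / sqrt (8 * iht_nu CARD('d::{finite,linorder}) k K)"
  shows "(\<forall>t. norm (x (Suc t) - xs) \<le> 1/2 * norm (x t - xs)
              + sqrt (iht_nu CARD('d::{finite,linorder}) k K * (1 + ric A (2 * k + K))) * norm eps)
       \<and> (\<forall>t. norm (x t - xs) \<le> (1/2) ^ t * norm (x 0 - xs)
              + 2 * sqrt (iht_nu CARD('d::{finite,linorder}) k K * (1 + ric A (2 * k + K))) * norm eps)"
proof -
  define c where "c = sqrt (iht_nu CARD('d::{finite,linorder}) k K * (1 + ric A (2 * k + K))) * norm eps"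
  have sp: "l0 (x t) \<le> k" for t
  proof (cases t)
    case 0 thus ?thesis using assms(5) by simp
  next
    case (Suc s)
    have "l0 (x t) \<le> card (kept k (x s + transpose A *v (y - A *v x s)))"
      unfolding Suc assms(6) by (rule l0_sub) (auto simp: hard_thr_nth split: if_splits)
    thus ?thesis using card_kept_le le_trans by blast
  qed
  have st: "\<forall>t. norm (x (Suc t) - xs) \<le> 1/2 * norm (x t - xs) + c"
    unfolding c_def assms(6) using step_bound[OF assms(1-4) sp assms(7)] by blast
  have "norm (x t - xs) \<le> (1/2) ^ t * norm (x 0 - xs) + 2 * c" for t
  proof (induction t)
    case 0
    have "0 \<le> c" unfolding c_def
      using ric_props(1)[of A "2*k+K"] nu_ge1[OF assms(3), of "CARD('d)"] by simp
    thus ?case by simp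
  next
    case (Suc t)
    thus ?case using st[rule_format, of t] by simp
  qed
  thus ?thesis using st unfolding c_def by (simp add: mult.assoc)
qed

end
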